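(* Let $p,q$ be positive integers and let $T_1$ be the least period of the Cat map over $\mathbb{Z}_2$. Then $G_{T_1}$ is even and $$\tfrac12 G_{T_1}-1=\begin{cases}\frac12 pq(pq+3)^2 & \text{if } p \text{ and } q \text{ are odd};\\ pq\left(\frac12 pq+2\right) & \text{if exactly one of } p,q \text{ is odd};\\ \frac12 pq & \text{if } p \text{ and } q \text{ are even}.\end{cases}$$
   Context: $\mathbf{C}=\begin{bmatrix}1 & p\\ q & 1+pq\end{bmatrix}$; the Cat map over $\mathbb{Z}_N$ is $v\mapsto\mathbf{C}v\bmod N$ on $\mathbb{Z}_N^2$, and its least period is the least $n\ge1$ with $\mathbf{C}^nv\equiv v\pmod N$ for all $v$. $A=pq+2$, $B=\sqrt{A^2-4}$, $G_n=\left(\frac{A+B}{2}\right)^n+\left(\frac{A-B}{2}\right)^n$. *)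

theory Defs
  imports Complex_Main
begin

definition cat_mat :: "int \<Rightarrow> int \<Rightarrow> int \<times> int \<Rightarrow> int \<times> int" where
  "cat_mat p q v = (fst v + p * snd v, q * fst v + (1 + p * q) * snd v)"

text \<open>Least period of the Cat map over Z_N: least n \<ge> 1 with C^n v = v (mod N) for all v.
  Vectors of Z_N^2 are represented by integer pairs, taken modulo N.\<close>
definition cat_period :: "int \<Rightarrow> int \<Rightarrow> int \<Rightarrow> nat" where
  "cat_period p q N = (LEAST n. n \<ge> 1 \<and>
     (\<forall>v. fst ((cat_mat p q ^^ n) v) mod N = fst v mod N \<and>
          snd ((cat_mat p q ^^ n) v) mod N = snd v mod N))"

definition catA :: "int \<Rightarrow> int \<Rightarrow> real" where
  "catA p q = real_of_int (p * q + 2)"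

definition catB :: "int \<Rightarrow> int \<Rightarrow> real" where
  "catB p q = sqrt ((catA p q)\<^sup>2 - 4)"

definition catG :: "int \<Rightarrow> int \<Rightarrow> nat \<Rightarrow> real" where
  "catG p q n = ((catA p q + catB p q) / 2) ^ n + ((catA p q - catB p q) / 2) ^ n"

end

theory Submission imports Defs begin
lemma mod2_iff: "(a::int) mod 2 = b mod 2 \<longleftrightarrow> (even a \<longleftrightarrow> even b)"
  by (metis even_iff_mod_2_eq_zero odd_iff_mod_2_eq_one)

lemma mod2I: "(even a \<longleftrightarrow> even b) \<Longrightarrow> (a::int) mod 2 = b mod 2"
  by (simp add: mod2_iff)

lemma per_cond_iff:
  "(\<forall>v. fst ((cat_mat p q ^^ n) v) mod 2 = fst v mod 2 \<and>
          snd ((cat_mat p q ^^ n) v) mod 2 = snd v mod 2) \<longleftrightarrow>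
   (\<forall>x y. (even (fst ((cat_mat p q ^^ n) (x,y))) \<longleftrightarrow> even x) \<and>
          (even (snd ((cat_mat p q ^^ n) (x,y))) \<longleftrightarrow> even y))"
  by (auto simp: mod2_iff)

lemma c1: "cat_mat p q ^^ 1 = cat_mat p q" by simp
lemma c2: "(cat_mat p q ^^ 2) v = cat_mat p q (cat_mat p q v)" by (simp add: numeral_eq_Suc)
lemma c3: "(cat_mat p q ^^ 3) v = cat_mat p q (cat_mat p q (cat_mat p q v))" by (simp add: numeral_eq_Suc)

lemma per_ee: assumes "even p" "even q" shows "cat_period p q 2 = 1"
  unfolding cat_period_def
proof (rule Least_equality)
  show "1 \<le> (1::nat) \<and> (\<forall>v. fst ((cat_mat p q ^^ 1) v) mod 2 = fst v mod 2 \<and>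
          snd ((cat_mat p q ^^ 1) v) mod 2 = snd v mod 2)"
    unfolding per_cond_iff using assms by (simp add: cat_mat_def)
qed simp

lemma per_oe: assumes "odd p \<noteq> odd q" shows "cat_period p q 2 = 2"
  unfolding cat_period_def
proof (rule Least_equality)
  show "1 \<le> (2::nat) \<and> (\<forall>v. fst ((cat_mat p q ^^ 2) v) mod 2 = fst v mod 2 \<and>
          snd ((cat_mat p q ^^ 2) v) mod 2 = snd v mod 2)"
    using assms by (auto intro!: mod2I simp: c2 cat_mat_def)
next
  fix n :: nat assume h: "1 \<le> n \<and> (\<forall>v. fst ((cat_mat p q ^^ n) v) mod 2 = fst v mod 2 \<and>
          snd ((cat_mat p q ^^ n) v) mod 2 = snd v mod 2)"
  show "2 \<le> n"
  proof (rule ccontr)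
    assume "\<not> 2 \<le> n" with h have "n = 1" by simp
    with h have "\<forall>x y. (even (fst (cat_mat p q (x,y))) \<longleftrightarrow> even x) \<and>
          (even (snd (cat_mat p q (x,y))) \<longleftrightarrow> even y)" unfolding per_cond_iff by simp
    from this[rule_format, of 0 1] this[rule_format, of 1 0] show False using assms
      by (auto simp: cat_mat_def)
  qed
qed

lemma per_oo: assumes "odd p" "odd q" shows "cat_period p q 2 = 3"
  unfolding cat_period_def
proof (rule Least_equality)
  show "1 \<le> (3::nat) \<and> (\<forall>v. fst ((cat_mat p q ^^ 3) v) mod 2 = fst v mod 2 \<and>
          snd ((cat_mat p q ^^ 3) v) mod 2 = snd v mod 2)"
    using assms by (auto intro!: mod2I simp: c3 cat_mat_def)
next
  fix n :: nat assume h: "1 \<le> n \<and> (\<forall>v. fst ((cat_mat p q ^^ n) v) mod 2 = fst v mod 2 \<and>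
          snd ((cat_mat p q ^^ n) v) mod 2 = snd v mod 2)"
  show "3 \<le> n"
  proof (rule ccontr)
    assume "\<not> 3 \<le> n" with h have "n = 1 \<or> n = 2" by auto
    then show False
    proof
      assume "n = 1"
      with h have "\<forall>x y. (even (fst (cat_mat p q (x,y))) \<longleftrightarrow> even x)" unfolding per_cond_iff by simp
      from this[rule_format, of 0 1] show False using assms by (auto simp: cat_mat_def)
    next
      assume "n = 2"
      with h have "\<forall>x y. (even (fst (cat_mat p q (cat_mat p q (x,y)))) \<longleftrightarrow> even x)" unfolding per_cond_iff by (simp add: c2)
      from this[rule_format, of 0 1] show False using assms by (auto simp: cat_mat_def)
    qed
  qed
qed



lemma B2: assumes "p > 0" "q > 0" shows "(catB p q)^2 = (catA p q)^2 - 4"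
proof -
  have "p*q \<ge> 1" using assms by (simp add: int_one_le_iff_zero_less)
  hence "catA p q \<ge> 3" unfolding catA_def by linarith
  hence "(catA p q)^2 \<ge> 3^2" using power_mono[of 3 "catA p q" 2] by simp
  hence "(catA p q)^2 - 4 \<ge> 0" by simp
  thus ?thesis unfolding catB_def by simp
qed

lemma G1: "catG p q 1 = catA p q" unfolding catG_def by (simp add: field_simps)
lemma G2: assumes "p > 0" "q > 0" shows "catG p q 2 = (catA p q)^2 - 2"
  using B2[OF assms] unfolding catG_def by (simp add: power2_eq_square field_simps)
lemma G3: assumes "p > 0" "q > 0" shows "catG p q 3 = (catA p q)^3 - 3 * catA p q"
proof -
  have b: "(catB p q)^2 = (catA p q)^2 - 4" by (rule B2[OF assms])
  have "catG p q 3 = ((catA p q)^3 + 3 * catA p q * (catB p q)^2) / 4"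
    unfolding catG_def by (simp add: power3_eq_cube power2_eq_square field_simps)
  also have "\<dots> = (catA p q)^3 - 3 * catA p q" unfolding b by (simp add: field_simps power3_eq_cube power2_eq_square)
  finally show ?thesis .
qed

lemma aux: "(2*(z::real)+2)/2 - 1 = z" by (simp add: add_divide_distrib)
lemma aux2: "((z::real)+2)/2 - 1 = z/2" by (simp add: add_divide_distrib)

theorem proposition4:
  fixes p q :: int
  assumes "p > 0" and "q > 0"
  defines "T1 \<equiv> cat_period p q 2"
  shows "(\<exists>k::int. catG p q T1 = real_of_int (2 * k)) \<and>
         catG p q T1 / 2 - 1 =
           (if odd p \<and> odd q then real_of_int (p * q) * (real_of_int (p * q) + 3)\<^sup>2 / 2
            else if odd p \<noteq> odd q then real_of_int (p * q) * (real_of_int (p * q) / 2 + 2)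
            else real_of_int (p * q) / 2)"

proof -
  have A: "catA p q = real_of_int (p*q) + 2" unfolding catA_def by simp
  consider (oo) "odd p" "odd q" | (mix) "odd p \<noteq> odd q" | (ee) "even p" "even q" by blast
  then show ?thesis
  proof cases
    case oo
    hence T: "T1 = 3" using per_oo[OF oo] T1_def by simp
    have pq: "odd (p*q)" using oo by simp
    then obtain m where m: "p*q = 2*m+1" by (metis oddE)
    have g: "catG p q T1 = real_of_int ((p*q+2)^3 - 3*(p*q+2))" unfolding T G3[OF assms(1,2)] A by simp
    have i1: "(p*q+2)^3 - 3*(p*q+2) = 2 * ((2*m+3)*(2*m^2+6*m+3))" unfolding m by algebra
    have i3: "real_of_int ((p*q+2)^3 - 3*(p*q+2)) = real_of_int (p*q) * (real_of_int (p*q)+3)^2 + 2"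
    proof -
      have "(p*q+2)^3 - 3*(p*q+2) = p*q*(p*q+3)^2 + 2" by algebra
      then show ?thesis by (metis of_int_add of_int_mult of_int_power of_int_numeral)
    qed
    show ?thesis
    proof
      show "\<exists>k::int. catG p q T1 = real_of_int (2 * k)" unfolding g i1 by blast
      show "catG p q T1 / 2 - 1 = (if odd p \<and> odd q then real_of_int (p * q) * (real_of_int (p * q) + 3)\<^sup>2 / 2
            else if odd p \<noteq> odd q then real_of_int (p * q) * (real_of_int (p * q) / 2 + 2)
            else real_of_int (p * q) / 2)"
        using oo unfolding g i3 by (simp add: field_simps)
    qed
  next
    case mix
    hence T: "T1 = 2" using per_oe[OF mix] T1_def by simp
    have pq: "even (p*q)" using mix by auto
    then obtain m where m: "p*q = 2*m" by (metis evenE)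
    have g: "catG p q T1 = real_of_int ((p*q+2)^2 - 2)" unfolding T G2[OF assms(1,2)] A by simp
    have i1: "(p*q+2)^2 - 2 = 2 * (2*m^2+4*m+1)" unfolding m by algebra
    have i3: "real_of_int ((p*q+2)^2 - 2) = 2 * (real_of_int (p*q) * (real_of_int (p*q)/2 + 2)) + 2"
    proof -
      have "real_of_int ((p*q+2)^2 - 2) = (real_of_int (p*q) + 2)^2 - 2" by simp
      also have "\<dots> = 2 * (real_of_int (p*q) * (real_of_int (p*q)/2 + 2)) + 2"
        by (simp add: power2_eq_square algebra_simps)
      finally show ?thesis .
    qed
    show ?thesis
    proof
      show "\<exists>k::int. catG p q T1 = real_of_int (2 * k)" unfolding g i1 by blast
      show "catG p q T1 / 2 - 1 = (if odd p \<and> odd q then real_of_int (p * q) * (real_of_int (p * q) + 3)\<^sup>2 / 2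
            else if odd p \<noteq> odd q then real_of_int (p * q) * (real_of_int (p * q) / 2 + 2)
            else real_of_int (p * q) / 2)"
        using mix unfolding g i3 aux by auto
    qed
  next
    case ee
    hence T: "T1 = 1" using per_ee[OF ee] T1_def by simp
    have pq: "even (p*q)" using ee by auto
    then obtain m where m: "p*q = 2*m" by (metis evenE)
    have g: "catG p q T1 = real_of_int (p*q+2)" unfolding T G1 A by simp
    show ?thesis
    proof
      show "\<exists>k::int. catG p q T1 = real_of_int (2 * k)"
        by (rule exI[of _ "m+1"], unfold g m, simp)
      show "catG p q T1 / 2 - 1 = (if odd p \<and> odd q then real_of_int (p * q) * (real_of_int (p * q) + 3)\<^sup>2 / 2
            else if odd p \<noteq> odd q then real_of_int (p * q) * (real_of_int (p * q) / 2 + 2)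
            else real_of_int (p * q) / 2)"
        using ee unfolding g of_int_add of_int_numeral aux2 by simp
    qed
  qed
qed

end
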